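(* Let $\mathcal{L}$ be a square lattice. Then there exist natural numbers $n_1, \ldots, n_t$ such that $\mathcal{L}$ is isomorphic (as a lattice) to the product $c(n_1) \times c(n_2) \times \cdots \times c(n_t)$ of chain lattices.
   Context: All lattices are finite distributive. $x \in \mathcal{L}$ is join-irreducible if $x = y\vee z$ implies $x=y$ or $x=z$ (so the minimum of $\mathcal{L}$, called the root, is join-irreducible); $J(\mathcal{L})$ is the poset of join-irreducibles. $\mathcal{L}$ is a tree lattice if the Hasse diagram of $J(\mathcal{L})$ is a tree; a square lattice is a tree lattice in which every vertex of this Hasse diagram other than the root has degree at most two. $c(n)$ denotes the totally ordered lattice (chain) with $n$ elements; products of lattices carry the componentwise order. *)

theory Defs
  imports Main
begin

(* x is join-irreducible: x = y \<squnion> z implies x = y or x = z (so the minimum is included) *)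
definition join_irred :: "'a::lattice \<Rightarrow> bool" where
  "join_irred x \<longleftrightarrow> (\<forall>y z. x = sup y z \<longrightarrow> x = y \<or> x = z)"

definition JI :: "'a::lattice set" where
  "JI = {x. join_irred x}"

definition hasse_cover :: "'a::order set \<Rightarrow> 'a \<Rightarrow> 'a \<Rightarrow> bool" where
  "hasse_cover J x y \<longleftrightarrow> x \<in> J \<and> y \<in> J \<and> x < y \<and> \<not> (\<exists>z\<in>J. x < z \<and> z < y)"

definition hasse_adj :: "'a::order set \<Rightarrow> 'a \<Rightarrow> 'a \<Rightarrow> bool" where
  "hasse_adj J x y \<longleftrightarrow> hasse_cover J x y \<or> hasse_cover J y x"

definition graph_connected :: "'a set \<Rightarrow> ('a \<Rightarrow> 'a \<Rightarrow> bool) \<Rightarrow> bool" where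
  "graph_connected V E \<longleftrightarrow>
     (\<forall>x\<in>V. \<forall>y\<in>V. (x, y) \<in> {(a, b). a \<in> V \<and> b \<in> V \<and> E a b}\<^sup>*)"

definition graph_has_cycle :: "'a set \<Rightarrow> ('a \<Rightarrow> 'a \<Rightarrow> bool) \<Rightarrow> bool" where
  "graph_has_cycle V E \<longleftrightarrow>
     (\<exists>vs. length vs \<ge> 3 \<and> distinct vs \<and> set vs \<subseteq> V \<and>
        (\<forall>i. Suc i < length vs \<longrightarrow> E (vs ! i) (vs ! Suc i)) \<and> E (last vs) (hd vs))"

definition is_tree :: "'a set \<Rightarrow> ('a \<Rightarrow> 'a \<Rightarrow> bool) \<Rightarrow> bool" where
  "is_tree V E \<longleftrightarrow> V \<noteq> {} \<and> graph_connected V E \<and> \<not> graph_has_cycle V E"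

definition tree_lattice :: "'a::lattice itself \<Rightarrow> bool" where
  "tree_lattice _ \<longleftrightarrow> is_tree (JI :: 'a set) (hasse_adj JI)"

definition square_lattice :: "'a::lattice itself \<Rightarrow> bool" where
  "square_lattice T \<longleftrightarrow> tree_lattice T \<and>
     (\<forall>x\<in>(JI :: 'a set). \<not> (\<forall>y. x \<le> y) \<longrightarrow> card {y\<in>JI. hasse_adj JI x y} \<le> 2)"

(* c(n_0) x ... x c(n_{t-1}), c(n) = {0..<n} with the usual order, componentwise order;
   tuples represented as functions nat \<Rightarrow> nat that vanish outside {0..<t} *)
definition chain_product :: "nat \<Rightarrow> (nat \<Rightarrow> nat) \<Rightarrow> (nat \<Rightarrow> nat) set" where
  "chain_product t n = {g. (\<forall>i<t. g i < n i) \<and> (\<forall>i\<ge>t. g i = 0)}"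

end

theory Submission
  imports Defs
begin

lemma cover_below:
  fixes J :: "'a::order set"
  assumes "finite J" "z \<in> J" "y \<in> J" "z < y"
  shows "\<exists>c. z \<le> c \<and> hasse_cover J c y"
proof -
  obtain m where m: "m \<in> {q\<in>J. z \<le> q \<and> q < y}" "z \<le> m"
    "\<forall>b\<in>{q\<in>J. z \<le> q \<and> q < y}. m \<le> b \<longrightarrow> m = b"
    using finite_has_maximal2[of "{q\<in>J. z \<le> q \<and> q < y}" z] assms by auto
  have "hasse_cover J m y" unfolding hasse_cover_def
  proof (intro conjI)
    show "\<not> (\<exists>w\<in>J. m < w \<and> w < y)"
    proof
      assume "\<exists>w\<in>J. m < w \<and> w < y"
      then obtain w where "w \<in> J" "m < w" "w < y" by blast
      thus False using m by force
    qed
  qed (use m assms in auto)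
  thus ?thesis using m by blast
qed

lemma cover_above:
  fixes J :: "'a::order set"
  assumes "finite J" "z \<in> J" "y \<in> J" "z < y"
  shows "\<exists>c. c \<le> y \<and> hasse_cover J z c"
proof -
  obtain m where m: "m \<in> {q\<in>J. z < q \<and> q \<le> y}" "m \<le> y"
    "\<forall>b\<in>{q\<in>J. z < q \<and> q \<le> y}. b \<le> m \<longrightarrow> m = b"
    using finite_has_minimal2[of "{q\<in>J. z < q \<and> q \<le> y}" y] assms by auto
  have "hasse_cover J z m" unfolding hasse_cover_def
  proof (intro conjI)
    show "\<not> (\<exists>w\<in>J. z < w \<and> w < m)"
    proof
      assume "\<exists>w\<in>J. z < w \<and> w < m"
      then obtain w where "w \<in> J" "z < w" "w < m" by blast
      thus False using m by force
    qed
  qed (use m assms in auto)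
  thus ?thesis using m by blast
qed

lemma path_down:
  fixes J :: "'a::order set"
  assumes "finite J" "z \<in> J"
  shows "y \<in> J \<Longrightarrow> z \<le> y \<Longrightarrow> \<exists>ws. ws \<noteq> [] \<and> hd ws = y \<and> last ws = z \<and> distinct ws \<and>
     set ws \<subseteq> {q\<in>J. z \<le> q \<and> q \<le> y} \<and> successively (\<lambda>a b. hasse_cover J b a) ws"
proof (induction "card {q\<in>J. z \<le> q \<and> q \<le> y}" arbitrary: y rule: less_induct)
  case (less y)
  show ?case
  proof (cases "z = y")
    case True
    then show ?thesis using less by (intro exI[of _ "[y]"]) auto
  next
    case False
    then have "z < y" using less by auto
    then obtain c where c: "z \<le> c" "hasse_cover J c y" using cover_below[OF assms(1,2) less.prems(1)] by blast
    have cJ: "c \<in> J" and cy: "c < y" using c unfolding hasse_cover_def by auto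
    have "{q\<in>J. z \<le> q \<and> q \<le> c} \<subset> {q\<in>J. z \<le> q \<and> q \<le> y}"
    proof
      show "{q\<in>J. z \<le> q \<and> q \<le> c} \<subseteq> {q\<in>J. z \<le> q \<and> q \<le> y}"
        using cy by auto
      have "y \<in> {q\<in>J. z \<le> q \<and> q \<le> y}" "y \<notin> {q\<in>J. z \<le> q \<and> q \<le> c}"
        using less cy by auto
      thus "{q\<in>J. z \<le> q \<and> q \<le> c} \<noteq> {q\<in>J. z \<le> q \<and> q \<le> y}" by blast
    qed
    hence "card {q\<in>J. z \<le> q \<and> q \<le> c} < card {q\<in>J. z \<le> q \<and> q \<le> y}"
      by (intro psubset_card_mono) (use assms in auto)
    from less.hyps[OF this cJ c(1)]
    obtain ws where ws: "ws \<noteq> []" "hd ws = c" "last ws = z" "distinct ws"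
      "set ws \<subseteq> {q\<in>J. z \<le> q \<and> q \<le> c}" "successively (\<lambda>a b. hasse_cover J b a) ws"
      by blast
    have yn: "y \<notin> set ws"
    proof
      assume "y \<in> set ws" hence "y \<le> c" using ws(5) by blast
      thus False using cy by simp
    qed
    have sub: "set (y # ws) \<subseteq> {q\<in>J. z \<le> q \<and> q \<le> y}"
    proof
      fix q assume "q \<in> set (y # ws)"
      hence "q = y \<or> q \<in> set ws" by simp
      thus "q \<in> {q\<in>J. z \<le> q \<and> q \<le> y}"
      proof
        assume "q = y" thus ?thesis using less.prems by simp
      next
        assume "q \<in> set ws" hence "q \<in> J" "z \<le> q" "q \<le> c" using ws(5) by blast+
        thus ?thesis using cy by simp
      qed
    qed
    have suc: "successively (\<lambda>a b. hasse_cover J b a) (y # ws)"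
      using ws(1,2,6) c(2) by (simp add: successively_Cons)
    have "y # ws \<noteq> [] \<and> hd (y # ws) = y \<and> last (y # ws) = z \<and> distinct (y # ws)"
      using ws(1,3,4) yn by simp
    thus ?thesis using sub suc by blast
  qed
qed

lemma hasse_adj_sym: "hasse_adj J x y = hasse_adj J y x"
  unfolding hasse_adj_def by auto

lemma two_lower_covers_cycle:
  fixes J :: "'a::order set"
  assumes fin: "finite J" and rJ: "r \<in> J" and rle: "\<forall>q\<in>J. r \<le> q"
    and c1: "hasse_cover J y1 p" and c2: "hasse_cover J y2 p" and ne: "y1 \<noteq> y2"
  shows "graph_has_cycle J (hasse_adj J)"
proof -
  have y: "y1 \<in> J" "y2 \<in> J" "p \<in> J" "y1 < p" "y2 < p"
    using c1 c2 unfolding hasse_cover_def by auto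
  have nle1: "\<not> y1 \<le> y2"
  proof
    assume "y1 \<le> y2" hence "y1 < y2" using ne by auto
    thus False using c1 y unfolding hasse_cover_def by blast
  qed
  have nle2: "\<not> y2 \<le> y1"
  proof
    assume "y2 \<le> y1" hence "y2 < y1" using ne by auto
    thus False using c2 y unfolding hasse_cover_def by blast
  qed
  obtain z where z: "z \<in> {q\<in>J. q \<le> y1 \<and> q \<le> y2}"
     "\<forall>b\<in>{q\<in>J. q \<le> y1 \<and> q \<le> y2}. z \<le> b \<longrightarrow> z = b"
    using finite_has_maximal[of "{q\<in>J. q \<le> y1 \<and> q \<le> y2}"] fin rJ rle y by auto
  have zJ: "z \<in> J" and zy1: "z \<le> y1" and zy2: "z \<le> y2" using z by auto
  obtain ws1 where w1: "ws1 \<noteq> []" "hd ws1 = y1" "last ws1 = z" "distinct ws1"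
      "set ws1 \<subseteq> {q\<in>J. z \<le> q \<and> q \<le> y1}" "successively (\<lambda>a b. hasse_cover J b a) ws1"
    using path_down[OF fin zJ y(1) zy1] by blast
  obtain ws2 where w2: "ws2 \<noteq> []" "hd ws2 = y2" "last ws2 = z" "distinct ws2"
      "set ws2 \<subseteq> {q\<in>J. z \<le> q \<and> q \<le> y2}" "successively (\<lambda>a b. hasse_cover J b a) ws2"
    using path_down[OF fin zJ y(2) zy2] by blast
  have zy2': "z \<noteq> y2" using zy1 nle2 by auto
  define bs where "bs = butlast ws2"
  have ws2eq: "ws2 = bs @ [z]" using w2 unfolding bs_def by (metis append_butlast_last_id)
  have bsne: "bs \<noteq> []" using ws2eq w2 zy2' by auto
  have hdbs: "hd bs = y2" using ws2eq w2 bsne by (cases bs) auto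
  have dbs: "distinct bs" "z \<notin> set bs" using w2(4) ws2eq by auto
  have sbs: "set bs \<subseteq> {q\<in>J. z \<le> q \<and> q \<le> y2}" using w2(5) ws2eq by auto
  have succ2: "successively (\<lambda>a b. hasse_cover J b a) bs" "hasse_cover J z (last bs)"
    using w2(6) bsne unfolding ws2eq by (auto simp: successively_append_iff)
  have disj: "set ws1 \<inter> set bs = {}"
  proof (rule ccontr)
    assume "set ws1 \<inter> set bs \<noteq> {}"
    then obtain q where q: "q \<in> set ws1" "q \<in> set bs" by blast
    have "q \<in> {q\<in>J. q \<le> y1 \<and> q \<le> y2}" "z \<le> q" using q w1(5) sbs by auto
    hence "z = q" using z(2) by blast
    thus False using q dbs by auto
  qed
  have p1: "p \<notin> set ws1" using w1(5) y by auto
  have p2: "p \<notin> set bs" using sbs y by auto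
  define vs where "vs = p # ws1 @ rev bs"
  have "length vs \<ge> 3" unfolding vs_def using w1(1) bsne
    by (cases ws1; cases bs) auto
  moreover have "distinct vs" unfolding vs_def using w1(4) dbs disj p1 p2 by auto
  moreover have "set vs \<subseteq> J" unfolding vs_def using w1(5) sbs y by auto
  moreover have "successively (hasse_adj J) vs"
  proof -
    have a: "successively (hasse_adj J) ws1"
      using w1(6) by (rule successively_mono) (auto simp: hasse_adj_def)
    have b: "successively (hasse_adj J) (rev bs)"
      using succ2(1) by (simp) (erule successively_mono, auto simp: hasse_adj_def)
    have c: "hasse_adj J (last ws1) (hd (rev bs))"
      using succ2(2) w1(3) bsne by (simp add: hd_rev hasse_adj_def)
    have d: "hasse_adj J p (hd ws1)" using c1 w1(2) by (simp add: hasse_adj_def)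
    show ?thesis unfolding vs_def using a b c d w1(1)
      by (auto simp: successively_Cons successively_append_iff)
  qed
  moreover have "hasse_adj J (last vs) (hd vs)"
    unfolding vs_def using bsne hdbs c2 by (simp add: last_rev hasse_adj_def)
  ultimately show ?thesis unfolding graph_has_cycle_def
    by (intro exI[of _ vs]) (auto simp: successively_conv_nth)
qed


lemma join_prime:
  fixes p :: "'a::distrib_lattice"
  assumes "p \<in> JI" "p \<le> sup x y"
  shows "p \<le> x \<or> p \<le> y"
proof -
  have "p = inf p (sup x y)" using assms(2) by (simp add: inf.absorb1)
  also have "\<dots> = sup (inf p x) (inf p y)" by (rule inf_sup_distrib1)
  finally have "p = inf p x \<or> p = inf p y" using assms(1) unfolding JI_def join_irred_def by blast
  thus ?thesis by (metis inf.cobounded2)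
qed

lemma join_rep:
  fixes x y :: "'a::{finite,lattice}"
  assumes "\<forall>p\<in>JI. p \<le> x \<longrightarrow> p \<le> y"
  shows "x \<le> y"
  using assms
proof (induction "card {q. q < x}" arbitrary: x rule: less_induct)
  case (less x)
  show ?case
  proof (cases "x \<in> JI")
    case True thus ?thesis using less.prems by auto
  next
    case False
    then obtain a b where ab: "x = sup a b" "x \<noteq> a" "x \<noteq> b"
      unfolding JI_def join_irred_def by auto
    have "a \<le> x" "b \<le> x" using ab by auto
    hence lt: "a < x" "b < x" using ab(2,3) by (auto simp: less_le)
    have "{q. q < a} \<subset> {q. q < x}" using lt by auto
    hence ca: "card {q. q < a} < card {q. q < x}" by (intro psubset_card_mono) auto
    have "{q. q < b} \<subset> {q. q < x}" using lt by auto
    hence cb: "card {q. q < b} < card {q. q < x}" by (intro psubset_card_mono) auto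
    have "a \<le> y" using less.hyps[OF ca] less.prems lt by (meson order.strict_implies_order order.trans)
    moreover have "b \<le> y" using less.hyps[OF cb] less.prems lt by (meson order.strict_implies_order order.trans)
    ultimately show ?thesis using ab by simp
  qed
qed

lemma root_JI:
  fixes r :: "'a::lattice"
  assumes "\<forall>x. r \<le> x"
  shows "r \<in> JI"
  unfolding JI_def join_irred_def
proof (intro CollectI allI impI)
  fix y z assume "r = sup y z"
  hence "y \<le> r" by simp
  hence "r = y" using assms by (simp add: antisym)
  thus "r = y \<or> r = z" ..
qed

lemma uniq_lower:
  fixes y1 :: "'a::{finite,distrib_lattice}" and r :: 'a
  assumes sq: "square_lattice TYPE('a)" and r: "\<forall>x. r \<le> x"
    and c: "hasse_cover JI y1 p" "hasse_cover JI y2 p"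
  shows "y1 = y2"
proof (rule ccontr)
  assume "y1 \<noteq> y2"
  hence "graph_has_cycle (JI::'a set) (hasse_adj JI)"
    using two_lower_covers_cycle[of JI r y1 p y2] c root_JI[OF r] r by auto
  thus False using sq unfolding square_lattice_def tree_lattice_def is_tree_def by auto
qed

lemma chain_down:
  fixes q :: "'a::{finite,distrib_lattice}" and r :: 'a
  assumes sq: "square_lattice TYPE('a)" and r: "\<forall>x. r \<le> x"
  shows "q \<in> JI \<Longrightarrow> \<forall>a\<in>JI. \<forall>b\<in>JI. a \<le> q \<longrightarrow> b \<le> q \<longrightarrow> a \<le> b \<or> b \<le> a"
proof (induction "card {x. x < q}" arbitrary: q rule: less_induct)
  case (less q)
  show ?case
  proof (intro ballI impI)
    fix a b assume ab: "a \<in> JI" "b \<in> JI" "a \<le> q" "b \<le> q"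
    show "a \<le> b \<or> b \<le> a"
    proof (cases "a = q \<or> b = q")
      case True thus ?thesis using ab by auto
    next
      case False
      hence "a < q" "b < q" using ab by auto
      then obtain c1 c2 where c: "a \<le> c1" "hasse_cover JI c1 q" "b \<le> c2" "hasse_cover JI c2 q"
        using cover_below[of JI a q] cover_below[of JI b q] ab less.prems by auto
      have "c1 = c2" using uniq_lower[OF sq r c(2) c(4)] .
      have c1: "c1 \<in> JI" "c1 < q" using c unfolding hasse_cover_def by auto
      have "{x. x < c1} \<subset> {x. x < q}" using c1 by auto
      hence "card {x. x < c1} < card {x. x < q}" by (intro psubset_card_mono) auto
      from less.hyps[OF this c1(1)] show ?thesis using ab c \<open>c1 = c2\<close> c1 by blast
    qed
  qed
qed

lemma uniq_upper:
  fixes p :: "'a::{finite,distrib_lattice}" and r :: 'a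
  assumes sq: "square_lattice TYPE('a)" and r: "\<forall>x. r \<le> x"
    and p: "p \<in> JI" "p \<noteq> r"
    and c: "hasse_cover JI p u1" "hasse_cover JI p u2"
  shows "u1 = u2"
proof (rule ccontr)
  assume ne: "u1 \<noteq> u2"
  have "r < p" using r p by (simp add: order.not_eq_order_implies_strict)
  then obtain c0 where c0: "hasse_cover JI c0 p"
    using cover_below[of JI r p] root_JI[OF r] p by auto
  have lt: "c0 < p" "p < u1" "p < u2" using c0 c unfolding hasse_cover_def by auto
  have nb: "\<not> (\<forall>y. p \<le> y)" using r p by (metis antisym)
  have "card {y\<in>(JI::'a set). hasse_adj JI p y} \<le> 2"
    using sq p(1) nb unfolding square_lattice_def by blast
  moreover have "{c0, u1, u2} \<subseteq> {y\<in>(JI::'a set). hasse_adj JI p y}"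
    using c0 c unfolding hasse_adj_def hasse_cover_def by auto
  hence "card {c0, u1, u2} \<le> card {y\<in>(JI::'a set). hasse_adj JI p y}"
    by (intro card_mono) auto
  moreover have "c0 < u1" "c0 < u2" using lt by (meson order.strict_trans)+
  hence "c0 \<noteq> u1" "c0 \<noteq> u2" by auto
  hence "card {c0, u1, u2} = 3" using ne by simp
  ultimately show False by simp
qed

lemma chain_up:
  fixes p :: "'a::{finite,distrib_lattice}" and r :: 'a
  assumes sq: "square_lattice TYPE('a)" and r: "\<forall>x. r \<le> x"
  shows "p \<in> JI \<Longrightarrow> p \<noteq> r \<Longrightarrow> \<forall>a\<in>JI. \<forall>b\<in>JI. p \<le> a \<longrightarrow> p \<le> b \<longrightarrow> a \<le> b \<or> b \<le> a"
proof (induction "card {x. p < x}" arbitrary: p rule: less_induct)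
  case (less p)
  show ?case
  proof (intro ballI impI)
    fix a b assume ab: "a \<in> JI" "b \<in> JI" "p \<le> a" "p \<le> b"
    show "a \<le> b \<or> b \<le> a"
    proof (cases "a = p \<or> b = p")
      case True thus ?thesis using ab by auto
    next
      case False
      hence "p < a" "p < b" using ab by auto
      then obtain c1 c2 where c: "c1 \<le> a" "hasse_cover JI p c1" "c2 \<le> b" "hasse_cover JI p c2"
        using cover_above[of JI p a] cover_above[of JI p b] ab less.prems by auto
      have "c1 = c2" using uniq_upper[OF sq r less.prems c(2) c(4)] .
      have c1: "c1 \<in> JI" "p < c1" using c unfolding hasse_cover_def by auto
      have c1r: "c1 \<noteq> r" using c1 r by (metis leD)
      have "{x. c1 < x} \<subset> {x. p < x}" using c1 by auto
      hence "card {x. c1 < x} < card {x. p < x}" by (intro psubset_card_mono) auto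
      from less.hyps[OF this c1(1) c1r] show ?thesis using ab c \<open>c1 = c2\<close> c1 by blast
    qed
  qed
qed

lemma chain_rank:
  fixes C :: "'a::order set"
  assumes fin: "finite C" and ch: "\<forall>a\<in>C. \<forall>b\<in>C. a \<le> b \<or> b \<le> a"
    and k: "1 \<le> k" "k \<le> card C"
  shows "\<exists>q\<in>C. card {p\<in>C. p \<le> q} = k"
proof -
  define h where "h q = card {p\<in>C. p \<le> q}" for q
  have mono: "h a < h b" if "a \<in> C" "b \<in> C" "a < b" for a b
  proof -
    have "b \<in> {p\<in>C. p \<le> b}" "b \<notin> {p\<in>C. p \<le> a}" using that by auto
    moreover have "{p\<in>C. p \<le> a} \<subseteq> {p\<in>C. p \<le> b}" using that by auto
    ultimately have "{p\<in>C. p \<le> a} \<subset> {p\<in>C. p \<le> b}" by blast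
    thus ?thesis unfolding h_def by (intro psubset_card_mono) (use fin in auto)
  qed
  have inj: "inj_on h C"
  proof (rule inj_onI)
    fix a b assume ab: "a \<in> C" "b \<in> C" "h a = h b"
    show "a = b"
    proof (rule ccontr)
      assume "a \<noteq> b"
      hence "a < b \<or> b < a" using ch ab by (auto simp: less_le)
      thus False using mono ab by fastforce
    qed
  qed
  have sub: "h ` C \<subseteq> {1..card C}"
  proof
    fix v assume "v \<in> h ` C"
    then obtain q where q: "q \<in> C" "v = h q" by blast
    have "{p\<in>C. p \<le> q} \<noteq> {}" using q by auto
    hence "h q \<ge> 1" unfolding h_def using fin by (simp add: Suc_le_eq card_gt_0_iff)
    moreover have "h q \<le> card C" unfolding h_def by (intro card_mono fin) auto
    ultimately show "v \<in> {1..card C}" using q by auto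
  qed
  have "card (h ` C) = card {1..card C}" using card_image[OF inj] by simp
  hence "h ` C = {1..card C}" using sub by (intro card_subset_eq) auto
  hence "k \<in> h ` C" using k by auto
  thus ?thesis unfolding h_def by auto
qed


theorem mainTheorem8:
  assumes "square_lattice TYPE('a::{finite, distrib_lattice})"
  shows "\<exists>(t::nat) (n::nat \<Rightarrow> nat) (f::'a \<Rightarrow> nat \<Rightarrow> nat).
           bij_betw f UNIV (chain_product t n) \<and>
           (\<forall>x y. f (sup x y) = (\<lambda>i. max (f x i) (f y i))) \<and>
           (\<forall>x y. f (inf x y) = (\<lambda>i. min (f x i) (f y i)))"
proof -
  note sq = assms
  obtain r :: 'a where r: "\<forall>x. r \<le> x"
    by (intro that[of "Inf_fin UNIV"]) (auto intro: Inf_fin.coboundedI)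
  have rJ: "r \<in> JI" using root_JI[OF r] .
  define P where "P = (JI::'a set) - {r}"
  define M where "M = {m\<in>P. \<forall>x\<in>P. x \<le> m \<longrightarrow> x = m}"
  define C where "C m = {q\<in>(JI::'a set). m \<le> q}" for m
  have MP: "m \<in> M \<Longrightarrow> m \<in> JI \<and> m \<noteq> r" for m unfolding M_def P_def by auto
  have Cchain: "m \<in> M \<Longrightarrow> a \<in> C m \<Longrightarrow> b \<in> C m \<Longrightarrow> a \<le> b \<or> b \<le> a" for m a b
    using chain_up[OF sq r, of m] MP unfolding C_def by blast
  have CP: "m \<in> M \<Longrightarrow> q \<in> C m \<Longrightarrow> q \<noteq> r" for m q
    using MP r unfolding C_def by (metis antisym mem_Collect_eq)
  have exM: "p \<in> JI \<Longrightarrow> p \<noteq> r \<Longrightarrow> \<exists>m\<in>M. p \<in> C m" for p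
  proof -
    assume p: "p \<in> JI" "p \<noteq> r"
    obtain m where m: "m \<in> {q\<in>P. q \<le> p}" "m \<le> p" "\<forall>b\<in>{q\<in>P. q \<le> p}. b \<le> m \<longrightarrow> m = b"
      using finite_has_minimal2[of "{q\<in>P. q \<le> p}" p] p unfolding P_def by auto
    have "m \<in> M" unfolding M_def using m by (auto dest: order.trans)
    thus ?thesis using m p unfolding C_def by auto
  qed
  have sep: "m \<in> M \<Longrightarrow> m' \<in> M \<Longrightarrow> a \<in> C m \<Longrightarrow> b \<in> C m' \<Longrightarrow> a \<le> b \<Longrightarrow> m = m'" for m m' a b
  proof -
    assume h: "m \<in> M" "m' \<in> M" "a \<in> C m" "b \<in> C m'" "a \<le> b"
    have "m \<le> b" "m' \<le> b" "b \<in> JI" using h unfolding C_def by (auto dest: order.trans)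
    hence "m \<le> m' \<or> m' \<le> m" using chain_down[OF sq r, of b] MP h by blast
    thus "m = m'" using h unfolding M_def by auto
  qed
  have finC: "finite (C m)" for m by simp
  obtain e where e: "bij_betw e {0..<card M} M" using ex_bij_betw_nat_finite[of M] by auto
  define t where "t = card M"
  have eM: "i < t \<Longrightarrow> e i \<in> M" for i using e unfolding t_def bij_betw_def by auto
  have einj: "i < t \<Longrightarrow> j < t \<Longrightarrow> e i = e j \<Longrightarrow> i = j" for i j
    using e unfolding t_def bij_betw_def inj_on_def by auto
  have esurj: "m \<in> M \<Longrightarrow> \<exists>i<t. e i = m" for m
    using e unfolding t_def bij_betw_def by (metis atLeastLessThan_iff imageE)
  define D where "D i x = {p \<in> C (e i). p \<le> x}" for i x
  define f where "f x = (\<lambda>i. if i < t then card (D i x) else 0)" for x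
  define n where "n i = card (C (e i)) + 1" for i
  have nest: "i < t \<Longrightarrow> D i x \<subseteq> D i y \<or> D i y \<subseteq> D i x" for i x y
  proof (rule ccontr)
    assume i: "i < t" and "\<not> (D i x \<subseteq> D i y \<or> D i y \<subseteq> D i x)"
    then obtain a b where ab: "a \<in> D i x" "a \<notin> D i y" "b \<in> D i y" "b \<notin> D i x" by blast
    have "a \<le> b \<or> b \<le> a" using Cchain[OF eM[OF i]] ab unfolding D_def by auto
    thus False using ab unfolding D_def by (auto dest: order.trans)
  qed
  have Dsup: "D i (sup x y) = D i x \<union> D i y" for i x y
    unfolding D_def C_def using join_prime by (auto intro: le_supI1 le_supI2)
  have Dinf: "D i (inf x y) = D i x \<inter> D i y" for i x y
    unfolding D_def by auto
  have fsup: "f (sup x y) = (\<lambda>i. max (f x i) (f y i))" for x y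
  proof
    fix i show "f (sup x y) i = max (f x i) (f y i)"
    proof (cases "i < t")
      case True
      then consider "D i x \<subseteq> D i y" | "D i y \<subseteq> D i x" using nest by blast
      thus ?thesis
      proof cases
        case 1
        hence "card (D i x) \<le> card (D i y)" by (intro card_mono) auto
        thus ?thesis using 1 True unfolding f_def Dsup by (simp add: Un_absorb1)
      next
        case 2
        hence "card (D i y) \<le> card (D i x)" by (intro card_mono) auto
        thus ?thesis using 2 True unfolding f_def Dsup by (simp add: Un_absorb2)
      qed
    qed (simp add: f_def)
  qed
  have finf: "f (inf x y) = (\<lambda>i. min (f x i) (f y i))" for x y
  proof
    fix i show "f (inf x y) i = min (f x i) (f y i)"
    proof (cases "i < t")
      case True
      then consider "D i x \<subseteq> D i y" | "D i y \<subseteq> D i x" using nest by blast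
      thus ?thesis
      proof cases
        case 1
        hence "card (D i x) \<le> card (D i y)" by (intro card_mono) auto
        thus ?thesis using 1 True unfolding f_def Dinf by (simp add: Int_absorb2)
      next
        case 2
        hence "card (D i y) \<le> card (D i x)" by (intro card_mono) auto
        thus ?thesis using 2 True unfolding f_def Dinf by (simp add: Int_absorb1)
      qed
    qed (simp add: f_def)
  qed
  have Deq: "f x = f y \<Longrightarrow> i < t \<Longrightarrow> D i x = D i y" for x y i
  proof -
    assume h: "f x = f y" "i < t"
    hence c: "card (D i x) = card (D i y)" unfolding f_def by meson
    consider "D i x \<subseteq> D i y" | "D i y \<subseteq> D i x" using nest h by blast
    thus "D i x = D i y"
    proof cases
      case 1 thus ?thesis using c by (intro card_subset_eq) auto
    next
      case 2 thus ?thesis using c by (metis card_subset_eq finite)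
    qed
  qed
  have lehalf: "f x = f y \<Longrightarrow> x \<le> y" for x y
  proof -
    assume h: "f x = f y"
    show "x \<le> y"
    proof (rule join_rep, intro ballI impI)
      fix p assume p: "p \<in> JI" "p \<le> x"
      show "p \<le> y"
      proof (cases "p = r")
        case True thus ?thesis using r by simp
      next
        case False
        then obtain m where m: "m \<in> M" "p \<in> C m" using exM p by blast
        then obtain i where i: "i < t" "e i = m" using esurj by blast
        have "p \<in> D i x" unfolding D_def using m i p by auto
        hence "p \<in> D i y" using Deq[OF h i(1)] by simp
        thus ?thesis unfolding D_def by auto
      qed
    qed
  qed
  have inj: "inj f" by (rule injI) (metis lehalf antisym)
  have img1: "f x \<in> chain_product t n" for x
  proof -
    have "i < t \<Longrightarrow> card (D i x) < n i" for i
    proof -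
      have "card (D i x) \<le> card (C (e i))" unfolding D_def by (intro card_mono) auto
      thus "card (D i x) < n i" unfolding n_def by simp
    qed
    thus ?thesis unfolding chain_product_def f_def by auto
  qed
  have Dr: "i < t \<Longrightarrow> D i r = {}" for i
    unfolding D_def using CP eM r by (metis (no_types, lifting) Collect_empty_eq antisym)
  have single: "\<exists>c. card (D i c) = g i \<and> (\<forall>j<t. j \<noteq> i \<longrightarrow> D j c = {})"
    if i: "i < t" and gi: "g i < n i" for i g
  proof (cases "g i = 0")
    case True thus ?thesis using Dr i by (intro exI[of _ r]) auto
  next
    case False
    have "\<exists>q\<in>C (e i). card {p\<in>C (e i). p \<le> q} = g i"
      using chain_rank[OF finC[of "e i"], of "g i"] Cchain[OF eM[OF i]] False gi
      unfolding n_def by auto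
    then obtain q where q: "q \<in> C (e i)" "card (D i q) = g i" unfolding D_def by auto
    have "D j q = {}" if j: "j < t" "j \<noteq> i" for j
    proof (rule ccontr)
      assume "D j q \<noteq> {}"
      then obtain p where "p \<in> C (e j)" "p \<le> q" unfolding D_def by auto
      hence "e j = e i" using sep[OF eM[OF j(1)] eM[OF i]] q by blast
      thus False using einj j i by blast
    qed
    thus ?thesis using q by blast
  qed
  have img2: "g \<in> range f" if g: "g \<in> chain_product t n" for g
  proof -
    have gi: "i < t \<Longrightarrow> g i < n i" for i using g unfolding chain_product_def by auto
    have "k \<le> t \<Longrightarrow> \<exists>x. (\<forall>j<k. card (D j x) = g j) \<and> (\<forall>j. k \<le> j \<and> j < t \<longrightarrow> D j x = {})" for k
    proof (induction k)
      case 0 thus ?case using Dr by (intro exI[of _ r]) auto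
    next
      case (Suc k)
      then obtain x where x: "\<forall>j<k. card (D j x) = g j" "\<forall>j. k \<le> j \<and> j < t \<longrightarrow> D j x = {}" by auto
      obtain c where c: "card (D k c) = g k" "\<forall>j<t. j \<noteq> k \<longrightarrow> D j c = {}"
        using single[of k g] gi Suc by auto
      show ?case
      proof (intro exI[of _ "sup x c"] conjI allI impI)
        fix j assume j: "j < Suc k"
        show "card (D j (sup x c)) = g j"
        proof (cases "j = k")
          case True thus ?thesis using x c Suc unfolding Dsup by auto
        next
          case False thus ?thesis using x c Suc j unfolding Dsup by auto
        qed
      next
        fix j assume "Suc k \<le> j \<and> j < t"
        thus "D j (sup x c) = {}" using x c unfolding Dsup by auto
      qed
    qed
    then obtain x where x: "\<forall>j<t. card (D j x) = g j" by blast
    have "f x = g"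
    proof
      fix i show "f x i = g i" using x g unfolding f_def chain_product_def by auto
    qed
    thus ?thesis by auto
  qed
  have "bij_betw f UNIV (chain_product t n)"
    unfolding bij_betw_def using inj img1 img2 by auto
  thus ?thesis using fsup finf by blast
qed

end
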